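(* Let $\mathbf{S}=(S_n)_{n\in\mathbb{N}}$ be a stationary ergodic information source with finite alphabet $A=\{1,\ldots,N\}$ (ordered by the usual order of integers), and let $R_n=\sum_{i=1}^{n}\delta(S_i\le S_n)$ be its rank variables. Then for every $l\ge 1$, \[ \lim_{k\to\infty} H_m\big(R_{k+1}^{k+l}\,\big|\,S_1^{k}\big)=\lim_{k\to\infty} H_m\big(S_{k+1}^{k+l}\,\big|\,S_1^{k}\big). \]
   Context: A finite-alphabet information source is a discrete-time stochastic process $\mathbf{S}=(S_n)_{n\in\mathbb{N}}$ of random variables with values in a finite alphabet $A$; it is stationary and ergodic if its sequence-space model $(A^{\mathbb{N}},\mathcal{Z},m,\sigma)$ (with $m$ the induced shift-invariant distribution on output sequences and $\sigma$ the left shift) is stationary and ergodic. For a proposition $P$, $\delta(P)=1$ if $P$ holds and $0$ otherwise. The rank variable $R_n=\sum_{i=1}^n\delta(S_i\le S_n)$ takes values in $\{1,\ldots,n\}$. For indices $i\le j$, $S_i^j$ denotes the word $S_i S_{i+1}\cdots S_j$, and similarly $R_i^j$. $H_m(\cdot\mid\cdot)$ denotes Shannon conditional entropy (logarithm base 2) computed with respect to the joint distribution of the process. *)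

theory Defs
  imports "HOL-Probability.Probability"
begin

text \<open>Sequence-space model of a process with values in the finite alphabet A = {1..N}.
  The source is S_1, S_2, ...; the value at index 0 of S is not part of the source.\<close>
definition seq_model :: "'a measure \<Rightarrow> nat \<Rightarrow> (nat \<Rightarrow> 'a \<Rightarrow> nat) \<Rightarrow> (nat \<Rightarrow> nat) measure" where
  "seq_model M N S = distr M (PiM UNIV (\<lambda>_. count_space {1..N})) (\<lambda>\<omega> n. S (Suc n) \<omega>)"

definition left_shift :: "(nat \<Rightarrow> nat) \<Rightarrow> (nat \<Rightarrow> nat)" where
  "left_shift x = (\<lambda>n. x (Suc n))"

definition stationary_model :: "(nat \<Rightarrow> nat) measure \<Rightarrow> bool" where
  "stationary_model m \<longleftrightarrow> left_shift \<in> measurable m m \<and> distr m m left_shift = m"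

definition ergodic_model :: "(nat \<Rightarrow> nat) measure \<Rightarrow> bool" where
  "ergodic_model m \<longleftrightarrow> (\<forall>B\<in>sets m. left_shift -` B \<inter> space m = B \<longrightarrow>
       emeasure m B = 0 \<or> emeasure m B = 1)"

definition rank_var :: "(nat \<Rightarrow> 'a \<Rightarrow> nat) \<Rightarrow> nat \<Rightarrow> 'a \<Rightarrow> nat" where
  "rank_var S n \<omega> = (\<Sum>i=1..n. if S i \<omega> \<le> S n \<omega> then 1 else 0)"

definition word :: "(nat \<Rightarrow> 'a \<Rightarrow> nat) \<Rightarrow> nat \<Rightarrow> nat \<Rightarrow> 'a \<Rightarrow> nat list" where
  "word X i j \<omega> = map (\<lambda>t. X t \<omega>) [i..<Suc j]"

definition cond_entropy2 :: "'a measure \<Rightarrow> ('a \<Rightarrow> 'b) \<Rightarrow> ('a \<Rightarrow> 'c) \<Rightarrow> real" where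
  "cond_entropy2 M Y X = prob_space.conditional_entropy M 2
     (count_space (Y ` space M)) (count_space (X ` space M)) Y X"

end

theory Submission
  imports Defs "HOL-Real_Asymp.Real_Asymp"
begin

lemma word_eq_gen: "word X i j x = word X i j y \<longleftrightarrow> (\<forall>t\<in>{i..j}. X t x = X t y)"
  unfolding word_def map_eq_conv by auto

lemma rank_card: "rank_var S t x = card {i\<in>{1..t}. S i x \<le> S t x}"
  unfolding rank_var_def by (simp add: sum.inter_filter[symmetric])

lemma rank_det: "(\<forall>i\<in>{1..t}. S i x = S i y) \<Longrightarrow> rank_var S t x = rank_var S t y"
  unfolding rank_var_def by (intro sum.cong) auto

lemma rank_lt:
  assumes IH: "\<forall>i. 1 \<le> i \<and> i < t \<longrightarrow> S i x = S i y"
    and i2: "1 \<le> i2" "i2 < t" "S i2 y = S t y" and lt: "S t x < S t y"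
  shows "rank_var S t x < rank_var S t y"
proof -
  have "{i\<in>{1..t}. S i x \<le> S t x} \<subset> {i\<in>{1..t}. S i y \<le> S t y}"
  proof
    show "{i\<in>{1..t}. S i x \<le> S t x} \<subseteq> {i\<in>{1..t}. S i y \<le> S t y}"
    proof
      fix i assume "i \<in> {i\<in>{1..t}. S i x \<le> S t x}"
      then have i: "1 \<le> i" "i \<le> t" "S i x \<le> S t x" by auto
      show "i \<in> {i\<in>{1..t}. S i y \<le> S t y}"
      proof (cases "i = t")
        case False
        then have "S i y = S i x" using IH i by auto
        then show ?thesis using i lt by auto
      qed (use i in auto)
    qed
    have "i2 \<in> {i\<in>{1..t}. S i y \<le> S t y}" "i2 \<notin> {i\<in>{1..t}. S i x \<le> S t x}"
      using i2 IH lt by auto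
    then show "{i\<in>{1..t}. S i x \<le> S t x} \<noteq> {i\<in>{1..t}. S i y \<le> S t y}" by blast
  qed
  then show ?thesis unfolding rank_card by (rule psubset_card_mono[rotated]) simp
qed

lemma uniq:
  assumes W: "word S 1 k x = word S 1 k y"
    and R: "word (rank_var S) (k+1) (k+l) x = word (rank_var S) (k+1) (k+l) y"
    and gx: "\<forall>j\<in>{k+1..k+l}. \<exists>i. 1 \<le> i \<and> i < j \<and> S i x = S j x"
    and gy: "\<forall>j\<in>{k+1..k+l}. \<exists>i. 1 \<le> i \<and> i < j \<and> S i y = S j y"
  shows "word S (k+1) (k+l) x = word S (k+1) (k+l) y"
proof -
  have "1 \<le> t \<longrightarrow> t \<le> k+l \<longrightarrow> S t x = S t y" for t
  proof (induction t rule: less_induct)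
    case (less t)
    show ?case
    proof (intro impI)
      assume t: "1 \<le> t" "t \<le> k+l"
      show "S t x = S t y"
      proof (cases "t \<le> k")
        case True then show ?thesis using W t unfolding word_eq_gen by auto
      next
        case False
        then have tk: "t \<in> {k+1..k+l}" using t by auto
        have IH: "\<forall>i. 1 \<le> i \<and> i < t \<longrightarrow> S i x = S i y" using less.IH t by auto
        have IH': "\<forall>i. 1 \<le> i \<and> i < t \<longrightarrow> S i y = S i x" using IH by auto
        have req: "rank_var S t x = rank_var S t y" using R tk unfolding word_eq_gen by auto
        obtain i1 where i1: "1 \<le> i1" "i1 < t" "S i1 x = S t x" using gx tk by blast
        obtain i2 where i2: "1 \<le> i2" "i2 < t" "S i2 y = S t y" using gy tk by blast
        show ?thesis
        proof (rule linorder_cases[of "S t x" "S t y"])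
          assume "S t x < S t y"
          from rank_lt[OF IH i2 this] req show ?thesis by simp
        next
          assume "S t y < S t x"
          from rank_lt[OF IH' i1 this] req show ?thesis by simp
        qed
      qed
    qed
  qed
  then show ?thesis unfolding word_eq_gen by auto
qed

locale rsrc = information_space +
  fixes S :: "nat \<Rightarrow> 'a \<Rightarrow> nat" and N :: nat
  assumes Smeas: "\<And>n. n \<ge> 1 \<Longrightarrow> S n \<in> measurable M (count_space {1..N})"
begin

lemma S_simple: "n \<ge> 1 \<Longrightarrow> simple_function M (S n)"
proof -
  assume n: "n \<ge> 1"
  have "S n ` space M \<subseteq> {1..N}" using measurable_space[OF Smeas[OF n]] by auto
  then have "finite (S n ` space M)" by (rule finite_subset) auto
  then show ?thesis unfolding simple_function_def
    using measurable_sets[OF Smeas[OF n]] measurable_space[OF Smeas[OF n]] by auto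
qed

lemma map_simple: "(\<forall>t\<in>set xs. t \<ge> 1) \<Longrightarrow> simple_function M (\<lambda>\<omega>. map (\<lambda>t. S t \<omega>) xs)"
proof (induction xs)
  case Nil then show ?case by (simp add: simple_function_def)
next
  case (Cons a xs)
  have "simple_function M (\<lambda>\<omega>. (S a \<omega>, map (\<lambda>t. S t \<omega>) xs))"
    using Cons by (intro simple_function_Pair S_simple) auto
  then have "simple_function M ((\<lambda>(x,y). x # y) \<circ> (\<lambda>\<omega>. (S a \<omega>, map (\<lambda>t. S t \<omega>) xs)))"
    by (rule simple_function_compose)
  then show ?case by (simp add: comp_def)
qed

lemma word_simple: "i \<ge> 1 \<Longrightarrow> simple_function M (word S i j)"
  unfolding word_def by (rule map_simple) auto

lemma determ:
  assumes "\<forall>x\<in>space M. \<forall>y\<in>space M. X x = X y \<longrightarrow> Y x = Y y"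
  shows "\<exists>f. \<forall>x\<in>space M. Y x = f (X x)"
proof
  let ?f = "\<lambda>v. Y (SOME x. x \<in> space M \<and> X x = v)"
  show "\<forall>x\<in>space M. Y x = ?f (X x)"
  proof
    fix x assume x: "x \<in> space M"
    then have "\<exists>z. z \<in> space M \<and> X z = X x" by auto
    then have "(SOME z. z \<in> space M \<and> X z = X x) \<in> space M \<and> X (SOME z. z \<in> space M \<and> X z = X x) = X x"
      by (rule someI_ex)
    then show "Y x = ?f (X x)" using assms x by metis
  qed
qed

lemma ent_cong:
  assumes "\<And>x. x \<in> space M \<Longrightarrow> X x = Y x"
  shows "\<H>(X) = \<H>(Y)"
proof -
  have "X ` space M = Y ` space M" using assms by auto
  moreover have "distr M (count_space (Y ` space M)) X = distr M (count_space (Y ` space M)) Y"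
    by (rule distr_cong) (auto simp: assms)
  ultimately show ?thesis unfolding entropy_def by simp
qed

lemma ent_leI:
  assumes X: "simple_function M X"
    and d: "\<forall>x\<in>space M. \<forall>y\<in>space M. X x = X y \<longrightarrow> Y x = Y y"
  shows "\<H>(Y) \<le> \<H>(X)" "simple_function M Y"
proof -
  obtain f where f: "\<forall>x\<in>space M. Y x = f (X x)" using determ[OF d] by blast
  have "\<H>(Y) = \<H>(f \<circ> X)" by (rule ent_cong) (simp add: f)
  also have "\<dots> \<le> \<H>(X)" by (rule entropy_data_processing[OF X])
  finally show "\<H>(Y) \<le> \<H>(X)" .
  have "simple_function M (f \<circ> X)" using X by (rule simple_function_compose)
  moreover have "simple_function M Y = simple_function M (f \<circ> X)"
    by (rule simple_function_cong) (simp add: f)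
  ultimately show "simple_function M Y" by simp
qed

lemma ent_eqI:
  assumes X: "simple_function M X"
    and d: "\<forall>x\<in>space M. \<forall>y\<in>space M. X x = X y \<longleftrightarrow> Y x = Y y"
  shows "\<H>(Y) = \<H>(X)"
proof -
  have 1: "\<H>(Y) \<le> \<H>(X)" "simple_function M Y" using ent_leI[OF X] d by auto
  have "\<H>(X) \<le> \<H>(Y)" using ent_leI[OF 1(2)] d by auto
  with 1 show ?thesis by simp
qed

lemma ent_sum:
  assumes X: "simple_function M X" and T: "finite T" "X ` space M \<subseteq> T"
  shows "\<H>(X) = - (\<Sum>v\<in>T. prob (X -` {v} \<inter> space M) * log b (prob (X -` {v} \<inter> space M)))"
proof -
  have "\<H>(X) = - (\<Sum>v\<in>X ` space M. prob (X -` {v} \<inter> space M) * log b (prob (X -` {v} \<inter> space M)))"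
    by (rule entropy_simple_distributed[OF simple_distributedI[OF X measure_nonneg refl]])
  also have "\<dots> = - (\<Sum>v\<in>T. prob (X -` {v} \<inter> space M) * log b (prob (X -` {v} \<inter> space M)))"
  proof -
    have "\<And>v. v \<in> T - X ` space M \<Longrightarrow> X -` {v} \<inter> space M = {}" by auto
    then show ?thesis by (subst sum.mono_neutral_left[OF T(1) T(2)]) auto
  qed
  finally show ?thesis .
qed

lemma marg:
  assumes V: "simple_function M V"
  shows "(\<Sum>v\<in>V ` space M. prob (V -` {v} \<inter> space M) * h (\<pi> v)) =
         (\<Sum>u\<in>(\<lambda>\<omega>. \<pi> (V \<omega>)) ` space M. prob ((\<lambda>\<omega>. \<pi> (V \<omega>)) -` {u} \<inter> space M) * h u)"
proof -
  have fin: "finite (V ` space M)" using simple_functionD(1)[OF V] .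
  have img: "(\<lambda>\<omega>. \<pi> (V \<omega>)) ` space M = \<pi> ` (V ` space M)" by auto
  have "(\<Sum>v\<in>V ` space M. prob (V -` {v} \<inter> space M) * h (\<pi> v)) =
     (\<Sum>u\<in>\<pi> ` (V ` space M). \<Sum>v\<in>{v\<in>V ` space M. \<pi> v = u}. prob (V -` {v} \<inter> space M) * h (\<pi> v))"
    by (rule sum.image_gen[OF fin])
  also have "\<dots> = (\<Sum>u\<in>\<pi> ` (V ` space M). (\<Sum>v\<in>{v\<in>V ` space M. \<pi> v = u}. prob (V -` {v} \<inter> space M)) * h u)"
    by (auto simp: sum_distrib_right intro!: sum.cong)
  also have "\<dots> = (\<Sum>u\<in>\<pi> ` (V ` space M). prob ((\<lambda>\<omega>. \<pi> (V \<omega>)) -` {u} \<inter> space M) * h u)"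
  proof (rule sum.cong[OF refl])
    fix u assume "u \<in> \<pi> ` (V ` space M)"
    have "(\<lambda>\<omega>. \<pi> (V \<omega>)) -` {u} \<inter> space M = (\<Union>v\<in>{v\<in>V ` space M. \<pi> v = u}. V -` {v} \<inter> space M)"
      by auto
    moreover have "prob (\<Union>v\<in>{v\<in>V ` space M. \<pi> v = u}. V -` {v} \<inter> space M) =
        (\<Sum>v\<in>{v\<in>V ` space M. \<pi> v = u}. prob (V -` {v} \<inter> space M))"
      by (rule finite_measure_finite_Union) (auto simp: fin simple_functionD(2)[OF V] disjoint_family_on_def)
    ultimately show "(\<Sum>v\<in>{v\<in>V ` space M. \<pi> v = u}. prob (V -` {v} \<inter> space M)) * h u =
       prob ((\<lambda>\<omega>. \<pi> (V \<omega>)) -` {u} \<inter> space M) * h u" by simp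
  qed
  finally show ?thesis by (simp only: img)
qed

lemma ent_sum_img:
  assumes X: "simple_function M X"
  shows "(\<Sum>v\<in>X ` space M. prob (X -` {v} \<inter> space M) * log b (prob (X -` {v} \<inter> space M))) = - \<H>(X)"
  using entropy_simple_distributed[OF simple_distributedI[OF X measure_nonneg refl]] by simp

lemma ssa:
  assumes X: "simple_function M X" and Y: "simple_function M Y" and Z: "simple_function M Z"
  shows "\<H>(\<lambda>\<omega>. (X \<omega>, Y \<omega>, Z \<omega>)) + \<H>(Z) \<le> \<H>(\<lambda>\<omega>. (X \<omega>, Z \<omega>)) + \<H>(\<lambda>\<omega>. (Y \<omega>, Z \<omega>))"
proof -
  let ?U = "\<lambda>\<omega>. (X \<omega>, Y \<omega>, Z \<omega>)"
  let ?XZ = "\<lambda>\<omega>. (X \<omega>, Z \<omega>)"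
  let ?YZ = "\<lambda>\<omega>. (Y \<omega>, Z \<omega>)"
  define pu where "pu u = prob (?U -` {u} \<inter> space M)" for u
  define pxz where "pxz u = prob (?XZ -` {u} \<inter> space M)" for u
  define pyz where "pyz u = prob (?YZ -` {u} \<inter> space M)" for u
  define pz where "pz u = prob (Z -` {u} \<inter> space M)" for u
  have U: "simple_function M ?U" using X Y Z by (intro simple_function_Pair)
  have XZ: "simple_function M ?XZ" using X Z by (intro simple_function_Pair)
  have YZ: "simple_function M ?YZ" using Y Z by (intro simple_function_Pair)
  have "0 \<le> \<I>(X ; Y | Z)" by (rule conditional_mutual_information_nonneg[OF X Y Z])
  also have "\<I>(X ; Y | Z) = (\<Sum>(x, y, z)\<in>?U`space M. pu (x, y, z) * log b (pu (x, y, z) / (pxz (x, z) * (pyz (y,z) / pz z))))"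
    unfolding pu_def pxz_def pyz_def pz_def
    by (rule conditional_mutual_information_eq[OF simple_distributedI[OF Z measure_nonneg refl]
       simple_distributedI[OF YZ measure_nonneg refl] simple_distributedI[OF XZ measure_nonneg refl]
       simple_distributedI[OF U measure_nonneg refl]])
  also have "\<dots> = (\<Sum>u\<in>?U`space M. pu u * log b (pu u) - pu u * log b (pxz (fst u, snd (snd u)))
       - pu u * log b (pyz (snd u)) + pu u * log b (pz (snd (snd u))))"
  proof (rule sum.cong[OF refl])
    fix u assume "u \<in> ?U ` space M"
    obtain x y z where u: "u = (x, y, z)" by (cases u) auto
    show "(case u of (x, y, z) \<Rightarrow> pu (x, y, z) * log b (pu (x, y, z) / (pxz (x, z) * (pyz (y,z) / pz z)))) =
       pu u * log b (pu u) - pu u * log b (pxz (fst u, snd (snd u)))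
       - pu u * log b (pyz (snd u)) + pu u * log b (pz (snd (snd u)))"
    proof (cases "pu u = 0")
      case True then show ?thesis by (simp add: u)
    next
      case False
      then have pos: "pu u > 0" unfolding pu_def using measure_nonneg[of M] by (simp add: less_le)
      have "pu u \<le> pxz (x, z)" unfolding pu_def pxz_def u
        by (rule finite_measure_mono) (auto intro: simple_functionD(2)[OF XZ])
      moreover have "pu u \<le> pyz (y, z)" unfolding pu_def pyz_def u
        by (rule finite_measure_mono) (auto intro: simple_functionD(2)[OF YZ])
      moreover have "pu u \<le> pz z" unfolding pu_def pz_def u
        by (rule finite_measure_mono) (auto intro: simple_functionD(2)[OF Z])
      ultimately have "pxz (x,z) > 0" "pyz (y,z) > 0" "pz z > 0" using pos by auto
      with pos show ?thesis by (simp add: u log_divide log_mult algebra_simps)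
    qed
  qed
  also have "\<dots> = (\<Sum>u\<in>?U`space M. pu u * log b (pu u)) - (\<Sum>u\<in>?U`space M. pu u * log b (pxz (fst u, snd (snd u))))
       - (\<Sum>u\<in>?U`space M. pu u * log b (pyz (snd u))) + (\<Sum>u\<in>?U`space M. pu u * log b (pz (snd (snd u))))"
    by (simp add: sum.distrib sum_subtractf)
  also have "(\<Sum>u\<in>?U`space M. pu u * log b (pu u)) = - \<H>(?U)"
    unfolding pu_def by (rule ent_sum_img[OF U])
  also have "(\<Sum>u\<in>?U`space M. pu u * log b (pxz (fst u, snd (snd u)))) = - \<H>(?XZ)"
    unfolding pu_def pxz_def
    by (subst marg[OF U, of "\<lambda>u. log b (pxz u)" "\<lambda>u. (fst u, snd (snd u))", unfolded pxz_def])
       (simp add: ent_sum_img[OF XZ])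
  also have "(\<Sum>u\<in>?U`space M. pu u * log b (pyz (snd u))) = - \<H>(?YZ)"
    unfolding pu_def pyz_def
    by (subst marg[OF U, of "\<lambda>u. log b (pyz u)" "\<lambda>u. snd u", unfolded pyz_def])
       (simp add: ent_sum_img[OF YZ])
  also have "(\<Sum>u\<in>?U`space M. pu u * log b (pz (snd (snd u)))) = - \<H>(Z)"
    unfolding pu_def pz_def
    by (subst marg[OF U, of "\<lambda>u. log b (pz u)" "\<lambda>u. snd (snd u)", unfolded pz_def])
       (simp add: ent_sum_img[OF Z])
  finally show ?thesis by simp
qed

lemma word_eq: "word S i j x = word S i j y \<longleftrightarrow> (\<forall>t\<in>{i..j}. S t x = S t y)"
  unfolding word_def map_eq_conv by auto

lemma word_len: "length (word S i j x) = Suc j - i"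
  unfolding word_def by (simp del: upt_Suc)

lemma word_Lset: "x \<in> space M \<Longrightarrow> i \<ge> 1 \<Longrightarrow> word S i j x \<in> {w. set w \<subseteq> {1..N} \<and> length w = Suc j - i}"
  unfolding word_def using measurable_space[OF Smeas] by (auto simp del: upt_Suc)

lemma F_meas: "(\<lambda>\<omega> n. S (Suc n) \<omega>) \<in> measurable M (PiM UNIV (\<lambda>_. count_space {1..N}))"
proof -
  have m: "\<And>n. S (Suc n) \<in> measurable M (count_space {1..N})" by (rule Smeas) simp
  show ?thesis by (rule measurable_PiM_single') (use m measurable_space[OF m] in auto)
qed

lemma map_meas: "(\<lambda>x. map x xs) \<in> measurable (PiM UNIV (\<lambda>_. count_space {1..N})) (count_space UNIV)"
proof (induction xs)
  case Nil then show ?case by (simp add: measurable_count_space_const)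
next
  case (Cons a xs)
  have "(\<lambda>x. (\<lambda>i x. i # map x xs) (x a) x) \<in> measurable (PiM UNIV (\<lambda>_. count_space {1..N})) (count_space UNIV)"
  proof (rule measurable_compose_countable'[where I="{1..N}" and f="\<lambda>i x. i # map x xs" and g="\<lambda>x. x a"])
    fix i :: nat
    show "(\<lambda>x. i # map x xs) \<in> measurable (PiM UNIV (\<lambda>_. count_space {1..N})) (count_space UNIV)"
      by (rule measurable_compose[OF Cons.IH, of "Cons i"]) simp
  next
    show "(\<lambda>x. x a) \<in> measurable (PiM UNIV (\<lambda>_. count_space {1..N})) (count_space {1..N})"
      by (rule measurable_component_singleton) simp
  qed simp
  then show ?case by simp
qed

lemma A_sets: "{x\<in>space (PiM UNIV (\<lambda>_. count_space {1..N})). map x xs = w} \<in> sets (PiM UNIV (\<lambda>_. count_space {1..N}))"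
  using measurable_sets[OF map_meas, of "{w}" xs] by (simp add: vimage_def Int_def conj_commute)

lemma prob_shift:
  assumes st: "stationary_model (seq_model M N S)"
  shows "prob (word S 2 (n+1) -` {w} \<inter> space M) = prob (word S 1 n -` {w} \<inter> space M)"
proof -
  let ?P = "PiM UNIV (\<lambda>_. count_space {1..N}) :: (nat \<Rightarrow> nat) measure"
  let ?m = "seq_model M N S"
  let ?F = "\<lambda>\<omega> n. S (Suc n) \<omega>"
  define A where "A j = {x\<in>space ?P. map x [j..<j+n] = w}" for j
  have sm: "space ?m = space ?P" "sets ?m = sets ?P" unfolding seq_model_def by auto
  have pre: "?F -` A j \<inter> space M = word S (j+1) (j+n) -` {w} \<inter> space M" for j
  proof -
    have "map (\<lambda>t. S (Suc t) \<omega>) [j..<j+n] = word S (j+1) (j+n) \<omega>" for \<omega>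
      unfolding word_def by (simp add: map_Suc_upt[symmetric] del: upt_Suc)
    then show ?thesis using measurable_space[OF F_meas] unfolding A_def by auto
  qed
  have mA: "measure ?m (A j) = prob (word S (j+1) (j+n) -` {w} \<inter> space M)" for j
    unfolding seq_model_def using measure_distr[OF F_meas A_sets[of "[j..<j+n]" w]] pre[of j]
    by (simp add: A_def)
  have ls: "left_shift \<in> measurable ?m ?m" "distr ?m ?m left_shift = ?m"
    using st unfolding stationary_model_def by auto
  have "left_shift -` A 0 \<inter> space ?m = A 1"
  proof -
    have "map (left_shift x) [0..<n] = map x [1..<1+n]" for x
      unfolding left_shift_def by (simp add: map_Suc_upt[symmetric] del: upt_Suc)
    then show ?thesis using measurable_space[OF ls(1)] unfolding A_def sm by auto
  qed
  moreover have "A 0 \<in> sets ?m" unfolding sm A_def by (rule A_sets)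
  ultimately have "measure ?m (A 0) = measure ?m (A 1)"
    using measure_distr[OF ls(1), of "A 0"] ls(2) by simp
  then show ?thesis using mA[of 0] mA[of 1] by (simp add: numeral_2_eq_2)
qed

lemma ent_shift:
  assumes st: "stationary_model (seq_model M N S)"
  shows "\<H>(word S 2 (n+1)) = \<H>(word S 1 n)"
proof -
  let ?T = "{w. set w \<subseteq> {1..N} \<and> length w = n}"
  have fin: "finite ?T" by (rule finite_lists_length_eq) simp
  have "\<H>(word S 2 (n+1)) = - (\<Sum>v\<in>?T. prob (word S 2 (n+1) -` {v} \<inter> space M) * log b (prob (word S 2 (n+1) -` {v} \<inter> space M)))"
    by (rule ent_sum[OF word_simple fin]) (use word_Lset[of _ 2 "n+1"] in auto)
  also have "\<dots> = - (\<Sum>v\<in>?T. prob (word S 1 n -` {v} \<inter> space M) * log b (prob (word S 1 n -` {v} \<inter> space M)))"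
    by (simp only: prob_shift[OF st])
  also have "\<dots> = \<H>(word S 1 n)"
    by (rule ent_sum[OF word_simple fin, symmetric]) (use word_Lset[of _ 1 n] in auto)
  finally show ?thesis .
qed

lemma word_append: "i \<le> Suc j \<Longrightarrow> j \<le> m \<Longrightarrow> word S i m x = word S i j x @ word S (Suc j) m x"
proof -
  assume a: "i \<le> Suc j" "j \<le> m"
  have "[i..<Suc m] = [i..<Suc j] @ [Suc j..<Suc m]"
    using upt_add_eq_append[of i "Suc j" "m - j"] a by simp
  then show ?thesis unfolding word_def by (simp del: upt_Suc)
qed

lemma word_split_eq: "i \<le> Suc j \<Longrightarrow> j \<le> m \<Longrightarrow>
   (word S i m x = word S i m y) \<longleftrightarrow> (word S i j x = word S i j y \<and> word S (Suc j) m x = word S (Suc j) m y)"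
proof -
  assume a: "i \<le> Suc j" "j \<le> m"
  have l: "length (word S i j x) = length (word S i j y)" by (simp add: word_len)
  show ?thesis using word_append[OF a, of x] word_append[OF a, of y] l by simp
qed

lemma ce_a: "\<H>(word S (k+1) (k+l) | word S 1 k) = \<H>(word S 1 (k+l)) - \<H>(word S 1 k)"
proof -
  have "\<H>(\<lambda>\<omega>. (word S 1 k \<omega>, word S (k+1) (k+l) \<omega>)) = \<H>(word S 1 k) + \<H>(word S (k+1) (k+l) | word S 1 k)"
    by (rule entropy_chain_rule[OF word_simple word_simple]) simp_all
  moreover have "\<H>(\<lambda>\<omega>. (word S 1 k \<omega>, word S (k+1) (k+l) \<omega>)) = \<H>(word S 1 (k+l))"
  proof (rule ent_eqI[OF word_simple])
    show "\<forall>x\<in>space M. \<forall>y\<in>space M. (word S 1 (k+l) x = word S 1 (k+l) y) = ((word S 1 k x, word S (k+1) (k+l) x) = (word S 1 k y, word S (k+1) (k+l) y))"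
      using word_split_eq[of 1 k "k+l"] by simp
  qed simp
  ultimately show ?thesis by simp
qed

lemma Hw_mono:
  assumes st: "stationary_model (seq_model M N S)"
  shows "\<H>(word S 1 (k+1+l)) + \<H>(word S 1 k) \<le> \<H>(word S 1 (k+1)) + \<H>(word S 1 (k+l))"
proof -
  let ?X = "word S 1 1" and ?Y = "word S (k+2) (k+1+l)" and ?Z = "word S 2 (k+1)"
  have "\<H>(\<lambda>\<omega>. (?X \<omega>, ?Y \<omega>, ?Z \<omega>)) + \<H>(?Z) \<le> \<H>(\<lambda>\<omega>. (?X \<omega>, ?Z \<omega>)) + \<H>(\<lambda>\<omega>. (?Y \<omega>, ?Z \<omega>))"
    by (rule ssa[OF word_simple word_simple word_simple]) simp_all
  moreover have "\<H>(\<lambda>\<omega>. (?X \<omega>, ?Y \<omega>, ?Z \<omega>)) = \<H>(word S 1 (k+1+l))"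
  proof (rule ent_eqI[OF word_simple])
    have e1: "word S 1 (k+1+l) x = word S 1 (k+1+l) y \<longleftrightarrow> word S 1 (k+1) x = word S 1 (k+1) y \<and> ?Y x = ?Y y" for x y
      using word_split_eq[of 1 "k+1" "k+1+l" x y] by simp
    have e2: "word S 1 (k+1) x = word S 1 (k+1) y \<longleftrightarrow> ?X x = ?X y \<and> ?Z x = ?Z y" for x y
      using word_split_eq[of 1 "1" "k+1" x y] by (simp add: numeral_2_eq_2)
    show "\<forall>x\<in>space M. \<forall>y\<in>space M. (word S 1 (k+1+l) x = word S 1 (k+1+l) y) = ((?X x, ?Y x, ?Z x) = (?X y, ?Y y, ?Z y))"
      using e1 e2 by blast
  qed simp
  moreover have "\<H>(\<lambda>\<omega>. (?X \<omega>, ?Z \<omega>)) = \<H>(word S 1 (k+1))"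
  proof (rule ent_eqI[OF word_simple])
    have e2: "word S 1 (k+1) x = word S 1 (k+1) y \<longleftrightarrow> ?X x = ?X y \<and> ?Z x = ?Z y" for x y
      using word_split_eq[of 1 "1" "k+1" x y] by (simp add: numeral_2_eq_2)
    show "\<forall>x\<in>space M. \<forall>y\<in>space M. (word S 1 (k+1) x = word S 1 (k+1) y) = ((?X x, ?Z x) = (?X y, ?Z y))"
      using e2 by blast
  qed simp
  moreover have "\<H>(\<lambda>\<omega>. (?Y \<omega>, ?Z \<omega>)) = \<H>(word S 2 (k+l+1))"
  proof (rule ent_eqI[OF word_simple])
    have e3: "word S 2 (k+l+1) x = word S 2 (k+l+1) y \<longleftrightarrow> ?Z x = ?Z y \<and> ?Y x = ?Y y" for x y
      using word_split_eq[of 2 "k+1" "k+l+1" x y] by (simp add: numeral_2_eq_2 add.commute add.left_commute)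
    show "\<forall>x\<in>space M. \<forall>y\<in>space M. (word S 2 (k+l+1) x = word S 2 (k+l+1) y) = ((?Y x, ?Z x) = (?Y y, ?Z y))"
      using e3 by blast
  qed simp
  moreover have "\<H>(word S 2 (k+l+1)) = \<H>(word S 1 (k+l))" by (rule ent_shift[OF st])
  moreover have "\<H>(?Z) = \<H>(word S 1 k)" by (rule ent_shift[OF st])
  ultimately show ?thesis by simp
qed

definition good :: "nat \<Rightarrow> nat \<Rightarrow> 'a \<Rightarrow> bool" where
  "good k l \<omega> \<longleftrightarrow> (\<forall>j\<in>{k+1..k+l}. \<exists>i. 1 \<le> i \<and> i < j \<and> S i \<omega> = S j \<omega>)"

definition Xp :: "nat \<Rightarrow> nat \<Rightarrow> 'a \<Rightarrow> nat list option" where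
  "Xp k l \<omega> = (if good k l \<omega> then None else Some (word S (k+1) (k+l) \<omega>))"

lemma gap:
  shows "\<H>(\<lambda>\<omega>. (word S 1 k \<omega>, word (rank_var S) (k+1) (k+l) \<omega>)) \<le> \<H>(word S 1 (k+l))"
    and "simple_function M (\<lambda>\<omega>. (word S 1 k \<omega>, word (rank_var S) (k+1) (k+l) \<omega>))"
    and "\<H>(word S 1 (k+l)) \<le> \<H>(\<lambda>\<omega>. (word S 1 k \<omega>, word (rank_var S) (k+1) (k+l) \<omega>)) + \<H>(Xp k l)"
proof -
  let ?V = "\<lambda>\<omega>. (word S 1 k \<omega>, word (rank_var S) (k+1) (k+l) \<omega>)"
  let ?X = "word S (k+1) (k+l)"
  let ?W = "word S 1 (k+l)"
  have WS: "simple_function M ?W" by (rule word_simple) simp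
  have split: "?W x = ?W y \<longleftrightarrow> word S 1 k x = word S 1 k y \<and> ?X x = ?X y" for x y
    using word_split_eq[of 1 k "k+l" x y] by simp
  have detV: "?V x = ?V y" if "?W x = ?W y" for x y
  proof -
    have a: "\<forall>t\<in>{1..k+l}. S t x = S t y" using that unfolding word_eq_gen .
    have "word (rank_var S) (k+1) (k+l) x = word (rank_var S) (k+1) (k+l) y"
      unfolding word_eq_gen using a by (auto intro!: rank_det)
    then show ?thesis using that split by simp
  qed
  have detXp: "Xp k l x = Xp k l y" if "?W x = ?W y" for x y
  proof -
    have a: "\<forall>t\<in>{1..k+l}. S t x = S t y" using that unfolding word_eq_gen .
    have "good k l x = good k l y" unfolding good_def
    proof (intro ball_cong refl ex_cong1)
      fix j i assume "j \<in> {k+1..k+l}"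
      then show "(1 \<le> i \<and> i < j \<and> S i x = S j x) = (1 \<le> i \<and> i < j \<and> S i y = S j y)"
        using a by auto
    qed
    then show ?thesis using that split unfolding Xp_def by simp
  qed
  have dV: "\<forall>x\<in>space M. \<forall>y\<in>space M. ?W x = ?W y \<longrightarrow> ?V x = ?V y" using detV by blast
  have dX: "\<forall>x\<in>space M. \<forall>y\<in>space M. ?W x = ?W y \<longrightarrow> Xp k l x = Xp k l y" using detXp by blast
  show V1: "\<H>(?V) \<le> \<H>(?W)" by (rule ent_leI(1)[OF WS dV])
  show Vs: "simple_function M ?V" by (rule ent_leI(2)[OF WS dV])
  have Xps: "simple_function M (Xp k l)" by (rule ent_leI(2)[OF WS dX])
  have "\<H>(?W) = \<H>(\<lambda>\<omega>. (?V \<omega>, ?X \<omega>))"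
  proof (rule ent_eqI[OF WS, symmetric])
    show "\<forall>x\<in>space M. \<forall>y\<in>space M. (?W x = ?W y) = ((?V x, ?X x) = (?V y, ?X y))"
    proof (intro ballI iffI)
      fix x y assume "?W x = ?W y"
      then show "(?V x, ?X x) = (?V y, ?X y)" using detV[of x y] split[of x y] by simp
    next
      fix x y assume "(?V x, ?X x) = (?V y, ?X y)"
      then show "?W x = ?W y" using split[of x y] by simp
    qed
  qed
  also have "\<dots> \<le> \<H>(\<lambda>\<omega>. (?V \<omega>, Xp k l \<omega>))"
  proof (rule ent_leI[OF simple_function_Pair[OF Vs Xps]])
    show "\<forall>x\<in>space M. \<forall>y\<in>space M. (?V x, Xp k l x) = (?V y, Xp k l y) \<longrightarrow> (?V x, ?X x) = (?V y, ?X y)"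
    proof (intro ballI impI)
      fix x y assume xy: "(?V x, Xp k l x) = (?V y, Xp k l y)"
      show "(?V x, ?X x) = (?V y, ?X y)"
      proof (cases "good k l x")
        case True
        then have "good k l y" using xy unfolding Xp_def by (auto split: if_splits)
        have "?X x = ?X y"
        proof (rule uniq)
          show "word S 1 k x = word S 1 k y" "word (rank_var S) (k+1) (k+l) x = word (rank_var S) (k+1) (k+l) y"
            using xy by simp_all
          show "\<forall>j\<in>{k+1..k+l}. \<exists>i. 1 \<le> i \<and> i < j \<and> S i x = S j x"
            using True unfolding good_def .
          show "\<forall>j\<in>{k+1..k+l}. \<exists>i. 1 \<le> i \<and> i < j \<and> S i y = S j y"
            using \<open>good k l y\<close> unfolding good_def .
        qed
        then show ?thesis using xy by simp
      next
        case False
        then have "\<not> good k l y" "?X x = ?X y" using xy unfolding Xp_def by (auto split: if_splits)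
        then show ?thesis using xy by simp
      qed
    qed
  qed
  also have "\<dots> = \<H>(?V) + \<H>(Xp k l | ?V)" by (rule entropy_chain_rule[OF Vs Xps])
  also have "\<dots> \<le> \<H>(?V) + \<H>(Xp k l)" using conditional_entropy_less_eq_entropy[OF Xps Vs] by simp
  finally show "\<H>(?W) \<le> \<H>(?V) + \<H>(Xp k l)" .
qed

definition isnew :: "nat \<Rightarrow> 'a \<Rightarrow> bool" where
  "isnew j \<omega> \<longleftrightarrow> (\<forall>i. 1 \<le> i \<and> i < j \<longrightarrow> S i \<omega> \<noteq> S j \<omega>)"

lemma new_simple: "j \<ge> 1 \<Longrightarrow> simple_function M (isnew j)"
proof -
  assume j: "j \<ge> 1"
  have "\<forall>x\<in>space M. \<forall>y\<in>space M. word S 1 j x = word S 1 j y \<longrightarrow> isnew j x = isnew j y"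
  proof (intro ballI impI)
    fix x y assume "word S 1 j x = word S 1 j y"
    then have a: "\<forall>t\<in>{1..j}. S t x = S t y" unfolding word_eq_gen .
    show "isnew j x = isnew j y" unfolding isnew_def
    proof (intro all_cong1 imp_cong refl)
      fix i assume "1 \<le> i \<and> i < j"
      then show "(S i x \<noteq> S j x) = (S i y \<noteq> S j y)" using a j by auto
    qed
  qed
  moreover have ws: "simple_function M (word S 1 j)" by (rule word_simple) simp
  ultimately show ?thesis using ent_leI(2)[OF ws] by blast
qed

lemma new_sets: "j \<ge> 1 \<Longrightarrow> {\<omega>\<in>space M. isnew j \<omega>} \<in> sets M"
proof -
  assume j: "j \<ge> 1"
  have "{\<omega>\<in>space M. isnew j \<omega>} = isnew j -` {True} \<inter> space M" by auto
  then show ?thesis using simple_functionD(2)[OF new_simple[OF j]] by simp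
qed

lemma new_card: "card {j\<in>{1..n}. isnew j \<omega>} \<le> N" if "\<omega> \<in> space M"
proof -
  have "card {j\<in>{1..n}. isnew j \<omega>} \<le> card {1..N}"
  proof (rule card_inj_on_le)
    show "inj_on (\<lambda>j. S j \<omega>) {j\<in>{1..n}. isnew j \<omega>}"
    proof (rule inj_onI)
      fix x y assume x: "x \<in> {j\<in>{1..n}. isnew j \<omega>}" and y: "y \<in> {j\<in>{1..n}. isnew j \<omega>}"
        and e: "S x \<omega> = S y \<omega>"
      show "x = y"
      proof (rule ccontr)
        assume "x \<noteq> y"
        then consider "x < y" | "y < x" by linarith
        then show False
        proof cases
          case 1 then show False using x y e unfolding isnew_def by auto
        next
          case 2 then show False using x y e unfolding isnew_def by auto
        qed
      qed
    qed
    show "(\<lambda>j. S j \<omega>) ` {j\<in>{1..n}. isnew j \<omega>} \<subseteq> {1..N}"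
      using measurable_space[OF Smeas] that by auto
  qed simp
  then show ?thesis by simp
qed

lemma new_sum: "(\<Sum>j\<in>{1..n}. prob {\<omega>\<in>space M. isnew j \<omega>}) \<le> N"
proof -
  have int: "integrable M (indicator {\<omega>\<in>space M. isnew j \<omega>} :: 'a \<Rightarrow> real)" if "j \<in> {1..n}" for j
    using new_sets[of j] that by (simp add: integrable_indicator_iff Int_absorb2 less_top[symmetric])
  have "(\<Sum>j\<in>{1..n}. prob {\<omega>\<in>space M. isnew j \<omega>}) = (\<Sum>j\<in>{1..n}. integral\<^sup>L M (indicator {\<omega>\<in>space M. isnew j \<omega>}))"
    by (simp add: Int_absorb2)
  also have "\<dots> = integral\<^sup>L M (\<lambda>\<omega>. \<Sum>j\<in>{1..n}. indicator {\<omega>\<in>space M. isnew j \<omega>} \<omega>)"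
    using Bochner_Integration.integral_sum[where I="{1..n}" and M=M and f="\<lambda>j. indicator {\<omega>\<in>space M. isnew j \<omega>} :: 'a \<Rightarrow> real"] int by simp
  also have "\<dots> \<le> integral\<^sup>L M (\<lambda>\<omega>. real N)"
  proof (rule integral_mono)
    show "integrable M (\<lambda>\<omega>. \<Sum>j\<in>{1..n}. indicator {\<omega>\<in>space M. isnew j \<omega>} \<omega> :: real)"
      by (rule Bochner_Integration.integrable_sum) (rule int)
    show "integrable M (\<lambda>\<omega>. real N)" by simp
    fix \<omega> assume w: "\<omega> \<in> space M"
    have "(\<Sum>j\<in>{1..n}. indicator {\<omega>\<in>space M. isnew j \<omega>} \<omega> :: real) = (\<Sum>j\<in>{1..n}. if isnew j \<omega> then 1 else 0)"
      using w by (intro sum.cong) (auto simp: indicator_def)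
    also have "\<dots> = real (card {j\<in>{1..n}. isnew j \<omega>})"
      by (simp add: sum.inter_filter[symmetric])
    also have "\<dots> \<le> real N" using new_card[OF w] by simp
    finally show "(\<Sum>j\<in>{1..n}. indicator {\<omega>\<in>space M. isnew j \<omega>} \<omega> :: real) \<le> real N" .
  qed
  also have "\<dots> = real N" by (simp add: prob_space)
  finally show ?thesis .
qed

lemma pnew_lim: "(\<lambda>j. prob {\<omega>\<in>space M. isnew (Suc j) \<omega>}) \<longlonglongrightarrow> 0"
proof -
  have "summable (\<lambda>j. prob {\<omega>\<in>space M. isnew (Suc j) \<omega>})"
  proof (rule summableI_nonneg_bounded)
    fix n
    show "(\<Sum>j<n. prob {\<omega>\<in>space M. isnew (Suc j) \<omega>}) \<le> real N"
      using new_sum[of n] by (simp add: sum.atLeast1_atMost_eq)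
  qed simp
  then show ?thesis by (rule summable_LIMSEQ_zero)
qed

lemma Xp_simple: "simple_function M (Xp k l)"
proof -
  have ws: "simple_function M (word S 1 (k+l))" by (rule word_simple) simp
  show Xps: "simple_function M (Xp k l)"
  proof (rule ent_leI(2)[OF ws])
    show "\<forall>x\<in>space M. \<forall>y\<in>space M. word S 1 (k+l) x = word S 1 (k+l) y \<longrightarrow> Xp k l x = Xp k l y"
    proof (intro ballI impI)
      fix x y assume "word S 1 (k+l) x = word S 1 (k+l) y"
      then have a: "\<forall>t\<in>{1..k+l}. S t x = S t y" unfolding word_eq_gen .
      have "good k l x = good k l y" unfolding good_def
      proof (intro ball_cong refl ex_cong1)
        fix j i assume "j \<in> {k+1..k+l}"
        then show "(1 \<le> i \<and> i < j \<and> S i x = S j x) = (1 \<le> i \<and> i < j \<and> S i y = S j y)"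
          using a by auto
      qed
      moreover have "word S (k+1) (k+l) x = word S (k+1) (k+l) y" using a unfolding word_eq_gen by auto
      ultimately show "Xp k l x = Xp k l y" unfolding Xp_def by simp
    qed
  qed
qed

lemma Bad_sets: "{\<omega>\<in>space M. \<not> good k l \<omega>} \<in> sets M"
proof -
  note Xps = Xp_simple[of k l]
  have "{\<omega>\<in>space M. \<not> good k l \<omega>} = Xp k l -` {y. y \<noteq> None} \<inter> space M"
    unfolding Xp_def by auto
  then show ?thesis using simple_functionD(2)[OF Xps, of "{y. y \<noteq> None}"] by simp
qed

lemma pbad_lim: "(\<lambda>k. prob {\<omega>\<in>space M. \<not> good k l \<omega>}) \<longlonglongrightarrow> 0"
proof (rule tendsto_sandwich[of "\<lambda>_. 0" _ _ "\<lambda>k. \<Sum>i<l. prob {\<omega>\<in>space M. isnew (Suc (k + i)) \<omega>}"])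
  show "\<forall>\<^sub>F k in sequentially. 0 \<le> prob {\<omega>\<in>space M. \<not> good k l \<omega>}" by simp
  show "\<forall>\<^sub>F k in sequentially. prob {\<omega>\<in>space M. \<not> good k l \<omega>} \<le> (\<Sum>i<l. prob {\<omega>\<in>space M. isnew (Suc (k + i)) \<omega>})"
  proof (intro always_eventually allI)
    fix k
    have sub: "{\<omega>\<in>space M. \<not> good k l \<omega>} \<subseteq> (\<Union>i\<in>{..<l}. {\<omega>\<in>space M. isnew (Suc (k + i)) \<omega>})"
    proof
      fix \<omega> assume "\<omega> \<in> {\<omega>\<in>space M. \<not> good k l \<omega>}"
      then obtain j where j: "j \<in> {k+1..k+l}" "\<not> (\<exists>i. 1 \<le> i \<and> i < j \<and> S i \<omega> = S j \<omega>)" "\<omega> \<in> space M"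
        unfolding good_def by auto
      then have "isnew (Suc (k + (j - k - 1))) \<omega>" unfolding isnew_def by auto
      moreover have "j - k - 1 \<in> {..<l}" using j by auto
      ultimately show "\<omega> \<in> (\<Union>i\<in>{..<l}. {\<omega>\<in>space M. isnew (Suc (k + i)) \<omega>})" using j by blast
    qed
    have us: "(\<lambda>i. {\<omega>\<in>space M. isnew (Suc (k + i)) \<omega>}) ` {..<l} \<subseteq> sets M"
      using new_sets by auto
    have "prob {\<omega>\<in>space M. \<not> good k l \<omega>} \<le> prob (\<Union>i\<in>{..<l}. {\<omega>\<in>space M. isnew (Suc (k + i)) \<omega>})"
      by (rule finite_measure_mono[OF sub]) (use us in auto)
    also have "\<dots> \<le> (\<Sum>i<l. prob {\<omega>\<in>space M. isnew (Suc (k + i)) \<omega>})"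
      by (rule measure_subadditive_finite) (use us in auto)
    finally show "prob {\<omega>\<in>space M. \<not> good k l \<omega>} \<le> (\<Sum>i<l. prob {\<omega>\<in>space M. isnew (Suc (k + i)) \<omega>})" .
  qed
  have "(\<lambda>k. \<Sum>i<l. prob {\<omega>\<in>space M. isnew (Suc (k + i)) \<omega>}) \<longlonglongrightarrow> (\<Sum>i<l. 0)"
  proof (rule tendsto_sum)
    fix i
    show "(\<lambda>k. prob {\<omega>\<in>space M. isnew (Suc (k + i)) \<omega>}) \<longlonglongrightarrow> 0"
      using LIMSEQ_ignore_initial_segment[OF pnew_lim, of i] by simp
  qed
  then show "(\<lambda>k. \<Sum>i<l. prob {\<omega>\<in>space M. isnew (Suc (k + i)) \<omega>}) \<longlonglongrightarrow> 0" by simp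
qed simp

lemma g0: "continuous (at 0 within {0..1}) (\<lambda>x::real. x * log b x)"
proof -
  have "((\<lambda>x::real. x * ln x) \<longlongrightarrow> 0) (at_right 0)" by real_asymp
  then have "((\<lambda>x::real. x * ln x / ln b) \<longlongrightarrow> 0) (at_right 0)" by (rule tendsto_divide_zero)
  then have "((\<lambda>x::real. x * log b x) \<longlongrightarrow> 0) (at 0 within {0..1})"
    by (simp add: at_within_Icc_at_right log_def)
  then show ?thesis unfolding continuous_within by simp
qed

lemma g1: "continuous (at 1 within A) (\<lambda>x::real. x * log b x)"
  using b_gt_1 by (intro continuous_intros) auto

lemma HXp_lim: "(\<lambda>k. \<H>(Xp k l)) \<longlonglongrightarrow> 0"
proof -
  define L where "L = {w. set w \<subseteq> {1..N} \<and> length w = l}"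
  define T where "T = insert None (Some ` L)"
  define q where "q k y = prob (Xp k l -` {y} \<inter> space M)" for k y
  have finT: "finite T" unfolding T_def L_def by (simp add: finite_lists_length_eq)
  have img: "Xp k l ` space M \<subseteq> T" for k
  proof
    fix y assume "y \<in> Xp k l ` space M"
    then obtain \<omega> where w: "\<omega> \<in> space M" "y = Xp k l \<omega>" by auto
    have "word S (k+1) (k+l) \<omega> \<in> L" using word_Lset[OF w(1), of "k+1" "k+l"] unfolding L_def by simp
    then show "y \<in> T" using w unfolding T_def Xp_def by auto
  qed
  have H: "\<H>(Xp k l) = - (\<Sum>y\<in>T. q k y * log b (q k y))" for k
    unfolding q_def by (rule ent_sum[OF Xp_simple finT img])
  have lim: "(\<lambda>k. q k y * log b (q k y)) \<longlonglongrightarrow> 0" if y: "y \<in> T" for y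
  proof (cases y)
    case None
    have "q k y = 1 - prob {\<omega>\<in>space M. \<not> good k l \<omega>}" for k
    proof -
      have "Xp k l -` {y} \<inter> space M = space M - {\<omega>\<in>space M. \<not> good k l \<omega>}"
        using None unfolding Xp_def by auto
      then show ?thesis unfolding q_def using prob_compl[OF Bad_sets[of k l]] by simp
    qed
    moreover have "(\<lambda>k. 1 - prob {\<omega>\<in>space M. \<not> good k l \<omega>}) \<longlonglongrightarrow> 1 - 0"
      by (intro tendsto_intros pbad_lim)
    ultimately have q1: "(\<lambda>k. q k y) \<longlonglongrightarrow> 1" by simp
    have "(\<lambda>k. q k y * log b (q k y)) \<longlonglongrightarrow> 1 * log b 1"
      by (rule continuous_within_tendsto_compose[OF g1[of UNIV] _ q1]) simp
    then show ?thesis by simp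
  next
    case (Some w)
    have q0: "(\<lambda>k. q k y) \<longlonglongrightarrow> 0"
    proof (rule tendsto_sandwich[of "\<lambda>_. 0" _ _ "\<lambda>k. prob {\<omega>\<in>space M. \<not> good k l \<omega>}"])
      show "\<forall>\<^sub>F k in sequentially. 0 \<le> q k y" unfolding q_def by simp
      show "\<forall>\<^sub>F k in sequentially. q k y \<le> prob {\<omega>\<in>space M. \<not> good k l \<omega>}"
      proof (intro always_eventually allI)
        fix k
        show "q k y \<le> prob {\<omega>\<in>space M. \<not> good k l \<omega>}" unfolding q_def
          by (rule finite_measure_mono[OF _ Bad_sets]) (auto simp: Some Xp_def)
      qed
    qed (simp_all add: pbad_lim)
    have "(\<lambda>k. q k y * log b (q k y)) \<longlonglongrightarrow> 0 * log b 0"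
      by (rule continuous_within_tendsto_compose[OF g0 _ q0]) (auto simp: q_def)
    then show ?thesis by simp
  qed
  have "(\<lambda>k. - (\<Sum>y\<in>T. q k y * log b (q k y))) \<longlonglongrightarrow> - (\<Sum>y\<in>T. 0)"
    by (intro tendsto_minus tendsto_sum lim)
  then show ?thesis unfolding H by simp
qed

lemma main:
  assumes st: "stationary_model (seq_model M N S)"
  shows "\<exists>L. (\<lambda>k. \<H>(word (rank_var S) (k+1) (k+l) | word S 1 k)) \<longlonglongrightarrow> L
           \<and> (\<lambda>k. \<H>(word S (k+1) (k+l) | word S 1 k)) \<longlonglongrightarrow> L"
proof -
  define a where "a k = \<H>(word S (k+1) (k+l) | word S 1 k)" for k
  define c where "c k = \<H>(word (rank_var S) (k+1) (k+l) | word S 1 k)" for k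
  have a_eq: "a k = \<H>(word S 1 (k+l)) - \<H>(word S 1 k)" for k unfolding a_def by (rule ce_a)
  have "decseq a"
  proof (rule decseq_SucI)
    fix k show "a (Suc k) \<le> a k" using Hw_mono[OF st, of k l] unfolding a_eq by simp
  qed
  moreover have "\<forall>i. 0 \<le> a i" unfolding a_def
    by (intro allI conditional_entropy_nonneg word_simple) simp_all
  ultimately obtain L where L: "a \<longlonglongrightarrow> L" by (rule decseq_convergent)
  have diff: "a k - c k = \<H>(word S 1 (k+l)) - \<H>(\<lambda>\<omega>. (word S 1 k \<omega>, word (rank_var S) (k+1) (k+l) \<omega>))" for k
  proof -
    have Vs: "simple_function M (\<lambda>\<omega>. (word S 1 k \<omega>, word (rank_var S) (k+1) (k+l) \<omega>))" by (rule gap(2))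
    have "simple_function M (snd \<circ> (\<lambda>\<omega>. (word S 1 k \<omega>, word (rank_var S) (k+1) (k+l) \<omega>)))"
      by (rule simple_function_compose[OF Vs])
    then have Rs: "simple_function M (word (rank_var S) (k+1) (k+l))" by (simp add: comp_def)
    have "\<H>(\<lambda>\<omega>. (word S 1 k \<omega>, word (rank_var S) (k+1) (k+l) \<omega>)) = \<H>(word S 1 k) + c k"
      unfolding c_def by (rule entropy_chain_rule[OF word_simple Rs]) simp
    then show ?thesis unfolding a_eq by simp
  qed
  have d0: "(\<lambda>k. a k - c k) \<longlonglongrightarrow> 0"
  proof (rule tendsto_sandwich[of "\<lambda>_. 0" _ _ "\<lambda>k. \<H>(Xp k l)"])
    show "\<forall>\<^sub>F k in sequentially. 0 \<le> a k - c k"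
      using gap(1) unfolding diff by simp
    show "\<forall>\<^sub>F k in sequentially. a k - c k \<le> \<H>(Xp k l)"
      using gap(3) unfolding diff by (simp add: algebra_simps)
  qed (simp_all add: HXp_lim)
  have "(\<lambda>k. a k - (a k - c k)) \<longlonglongrightarrow> L - 0" by (intro tendsto_intros L d0)
  then have "c \<longlonglongrightarrow> L" by simp
  with L show ?thesis unfolding a_def c_def by blast
qed


end

theorem lemma1:
  fixes M :: "'a measure" and S :: "nat \<Rightarrow> 'a \<Rightarrow> nat" and N :: nat and l :: nat
  assumes "prob_space M"
    and "N \<ge> 1"
    and "\<And>n. n \<ge> 1 \<Longrightarrow> S n \<in> measurable M (count_space {1..N})"
    and "stationary_model (seq_model M N S)"
    and "ergodic_model (seq_model M N S)"
    and "l \<ge> 1"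
  shows "\<exists>L. (\<lambda>k. cond_entropy2 M (word (rank_var S) (k+1) (k+l)) (word S 1 k)) \<longlonglongrightarrow> L
           \<and> (\<lambda>k. cond_entropy2 M (word S (k+1) (k+l)) (word S 1 k)) \<longlonglongrightarrow> L"
proof -
  interpret rsrc M 2 S N
    unfolding rsrc_def rsrc_axioms_def information_space_def information_space_axioms_def
    using assms(1,3) by auto
  show ?thesis unfolding cond_entropy2_def using main[OF assms(4), of l] .
qed

end
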